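(* For any choice of the almost disjoint family and enumeration in its definition, $[0,1]\notin\mathrm{FinBW}(\rho^{[0,1]})$.
   Context: $\mathrm{conv}$ is the ideal on $\mathbb{Q}\cap[0,1]$ of all sets covered by the ranges of finitely many sequences in $\mathbb{Q}\cap[0,1]$ convergent in $[0,1]$. Definition of $\rho^{[0,1]}$: let $\mathcal{A}=\{A_\alpha:\alpha<\mathfrak{c}\}$ be an almost disjoint family on $\omega$ (pairwise distinct infinite subsets with pairwise finite intersections). Let $X$ be the set of all $x\colon\omega\times\omega\to[0,1]\cap\mathbb{Q}$ such that: (i) for every $p\in[0,1]$ there is an open neighborhood $U$ of $p$ with $x[(\omega\setminus[0,n])\times\omega]\not\subseteq U$ for all $n$; (ii) $x$ is injective; (iii) $x[(\omega\setminus[0,n])\times\omega]\notin\mathrm{conv}$ for all $n$. Fix an enumeration $X=\{x_\alpha:\alpha<\mathfrak{c}\}$. Let $\overline{\mathcal{A}}=\{A\setminus K:A\in\mathcal{A},K\in[\omega]^{<\omega}\}$ and $\rho^{[0,1]}\colon\overline{\mathcal{A}}\to[[0,1]\cap\mathbb{Q}]^\omega$, $\rho^{[0,1]}(A_\alpha\setminus K)=x_\alpha[(\omega\setminus[0,\max(A_\alpha\cap K)])\times\omega]$, with $\max\emptyset=0$; here $[0,m]=\{0,\dots,m\}$. (This is a partition regular function.) For a function $\rho\colon\mathcal{F}\to[\Lambda]^\omega$ with $\mathcal{F}\subseteq[\Omega]^\omega$ and a Hausdorff space $Y$: for $f\colon\Lambda\to Y$ and $F\in\mathcal{F}$, $f\restriction\rho(F)$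 $\rho$-converges to $y$ if for every neighborhood $U$ of $y$ some finite $K\subseteq\Omega$ has $f[\rho(F\setminus K)]\subseteq U$; $\mathrm{FinBW}(\rho)$ is the class of spaces $Y$ such that for every $f\colon\Lambda\to Y$ some $F\in\mathcal{F}$ makes $f\restriction\rho(F)$ $\rho$-convergent to a point of $Y$. *)

theory Defs
  imports "HOL-Analysis.Analysis"
begin

definition Q01 :: "real set" where
  "Q01 = {q. q \<in> \<rat> \<and> 0 \<le> q \<and> q \<le> 1}"

definition conv :: "real set \<Rightarrow> bool" where
  "conv A \<longleftrightarrow> A \<subseteq> Q01 \<and>
     (\<exists>S :: (nat \<Rightarrow> real) set. finite S \<and>
        (\<forall>s\<in>S. range s \<subseteq> Q01 \<and> (\<exists>L\<in>{0..1}. s \<longlonglongrightarrow> L)) \<and>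
        A \<subseteq> \<Union> (range ` S))"

definition tail :: "nat \<Rightarrow> (nat \<times> nat) set" where
  "tail n = {p. fst p > n}"

definition Xset :: "(nat \<times> nat \<Rightarrow> real) set" where
  "Xset = {x. range x \<subseteq> Q01
      \<and> (\<forall>p\<in>{0..1::real}. \<exists>U. openin (top_of_set {0..1}) U \<and> p \<in> U
             \<and> (\<forall>n. \<not> (x ` tail n \<subseteq> U)))
      \<and> inj x
      \<and> (\<forall>n. \<not> conv (x ` tail n))}"

definition maxz :: "nat set \<Rightarrow> nat" where
  "maxz S = (if S = {} then 0 else Max S)"

definition almost_disjoint_family :: "('i \<Rightarrow> nat set) \<Rightarrow> bool" where
  "almost_disjoint_family A \<longleftrightarrow> inj A \<and> (\<forall>i. infinite (A i))
     \<and> (\<forall>i j. i \<noteq> j \<longrightarrow> finite (A i \<inter> A j))"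

definition Abar :: "('i \<Rightarrow> nat set) \<Rightarrow> nat set set" where
  "Abar A = {A i - K | i K. finite K}"

text \<open>The function rho^[0,1] (well defined on Abar A for an almost disjoint family A).\<close>
definition rho01 :: "('i \<Rightarrow> nat set) \<Rightarrow> ('i \<Rightarrow> nat \<times> nat \<Rightarrow> real) \<Rightarrow> nat set \<Rightarrow> real set" where
  "rho01 A x F = (SOME Y. \<exists>i K. finite K \<and> F = A i - K
       \<and> Y = x i ` tail (maxz (A i \<inter> K)))"

definition rho_converges ::
  "('o set \<Rightarrow> 'l set) \<Rightarrow> ('l \<Rightarrow> 'y) \<Rightarrow> 'o set \<Rightarrow> 'y topology \<Rightarrow> 'y \<Rightarrow> bool" where
  "rho_converges \<rho> f F T y \<longleftrightarrow>
     (\<forall>U. openin T U \<and> y \<in> U \<longrightarrow> (\<exists>K. finite K \<and> f ` \<rho> (F - K) \<subseteq> U))"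

definition FinBW ::
  "('o set \<Rightarrow> 'l set) \<Rightarrow> 'o set set \<Rightarrow> 'l set \<Rightarrow> 'y topology \<Rightarrow> bool" where
  "FinBW \<rho> \<F> \<Lambda> T \<longleftrightarrow>
     (\<forall>f. f ` \<Lambda> \<subseteq> topspace T \<longrightarrow>
        (\<exists>F\<in>\<F>. \<exists>y\<in>topspace T. rho_converges \<rho> f F T y))"

end

theory Submission
  imports Defs
begin

lemma rho_shape:
  assumes ad: "almost_disjoint_family A" and K: "finite K"
  shows "\<exists>n. rho01 A x (A i - K) = x i ` tail n"
proof -
  let ?P = "\<lambda>Y. \<exists>j K'. finite K' \<and> A i - K = A j - K' \<and> Y = x j ` tail (maxz (A j \<inter> K'))"
  have "?P (x i ` tail (maxz (A i \<inter> K)))" using K by blast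
  hence "?P (rho01 A x (A i - K))" unfolding rho01_def by (rule someI)
  then obtain j K' where K': "finite K'" and eq: "A i - K = A j - K'"
    and Y: "rho01 A x (A i - K) = x j ` tail (maxz (A j \<inter> K'))" by blast
  have "j = i"
  proof (rule ccontr)
    assume "j \<noteq> i"
    hence "finite (A i \<inter> A j)" using ad unfolding almost_disjoint_family_def by (metis Int_commute)
    moreover have "A i - K \<subseteq> A i \<inter> A j" using eq by blast
    ultimately have "finite (A i - K)" by (meson finite_subset)
    hence "finite (A i)" using K by (metis Diff_infinite_finite)
    thus False using ad unfolding almost_disjoint_family_def by blast
  qed
  thus ?thesis using Y by blast
qed

theorem lemma6p5:
  fixes A :: "real \<Rightarrow> nat set"
    and x :: "real \<Rightarrow> nat \<times> nat \<Rightarrow> real"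
  assumes "almost_disjoint_family A"
    and "bij_betw x UNIV Xset"
  shows "\<not> FinBW (rho01 A x) (Abar A) Q01 (top_of_set {0..1::real})"
proof
  assume H: "FinBW (rho01 A x) (Abar A) Q01 (top_of_set {0..1::real})"
  have idQ: "id ` Q01 \<subseteq> topspace (top_of_set {0..1::real})" by (auto simp: Q01_def)
  have "\<exists>F\<in>Abar A. \<exists>y\<in>topspace (top_of_set {0..1::real}). rho_converges (rho01 A x) id F (top_of_set {0..1}) y"
    using H[unfolded FinBW_def, rule_format, OF idQ] .
  then obtain F y where F: "F \<in> Abar A" and y: "y \<in> {0..1::real}"
    and c: "rho_converges (rho01 A x) id F (top_of_set {0..1}) y"
    by auto
  obtain i K0 where K0: "finite K0" and Fd: "F = A i - K0" using F unfolding Abar_def by blast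
  have "x i \<in> Xset" using assms(2) by (simp add: bij_betw_apply)
  then obtain U where U: "openin (top_of_set {0..1}) U" "y \<in> U" and nU: "\<And>n. \<not> (x i ` tail n \<subseteq> U)"
    using y unfolding Xset_def by blast
  obtain K where K: "finite K" and sub: "id ` rho01 A x (F - K) \<subseteq> U"
    using c U unfolding rho_converges_def by blast
  have "F - K = A i - (K0 \<union> K)" using Fd by blast
  then obtain n where "rho01 A x (F - K) = x i ` tail n"
    using rho_shape[OF assms(1), of "K0 \<union> K" x i] K0 K by auto
  thus False using sub nU by simp
qed

end
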